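(* Let $H$ be a $\{P,C\}$-free 3-graph on vertex set $V$, let $e_1,e_2\in H$ with $e_1\cap e_2=\{x\}$, set $U=e_1\cup e_2$, $W=V\setminus U$, and assume $H[W]$ has at least one edge. Let $W_0$ be the set of vertices of degree $0$ in $H[W]$, $W_1=W\setminus W_0$ (so $|W_1|\ge 3$), and let $H_1$ be the set of edges $h\in H$ with $h\cap U\ne\emptyset$, $h\cap W\neq\emptyset$ and $h\cap W\subseteq W_1$. Then $|H_1|\le 2|W_1|-3$, and if moreover $|W_1|\ge 4$ then $|H[U]|+|H_1|\le 2|W_1|+2$.
   Context: All hypergraphs are 3-uniform; edge sets are identified with the 3-graphs; $H[S]$ is the sub-3-graph induced on $S$. $P$ is the loose 3-uniform path of length 3: vertices $a,b,c,d,e,f,g$, edges $\{a,b,c\},\{c,d,e\},\{e,f,g\}$. $C$ is the loose triangle: vertices $x_1,x_2,x_3,y_1,y_2,y_3$, edges $\{x_1,y_3,x_2\},\{x_2,y_1,x_3\},\{x_3,y_2,x_1\}$. $\{P,C\}$-free means containing no copy of $P$ and no copy of $C$. *)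

theory Defs
  imports Main
begin

definition three_graph :: "'a set \<Rightarrow> 'a set set \<Rightarrow> bool" where
  "three_graph V H \<longleftrightarrow> finite V \<and> (\<forall>e\<in>H. e \<subseteq> V \<and> card e = 3)"

definition contains_P :: "'a set set \<Rightarrow> bool" where
  "contains_P H \<longleftrightarrow> (\<exists>a b c d e f g. distinct [a, b, c, d, e, f, g] \<and>
      {a, b, c} \<in> H \<and> {c, d, e} \<in> H \<and> {e, f, g} \<in> H)"

definition contains_C :: "'a set set \<Rightarrow> bool" where
  "contains_C H \<longleftrightarrow> (\<exists>x1 x2 x3 y1 y2 y3. distinct [x1, x2, x3, y1, y2, y3] \<and>
      {x1, y3, x2} \<in> H \<and> {x2, y1, x3} \<in> H \<and> {x3, y2, x1} \<in> H)"

definition PC_free :: "'a set set \<Rightarrow> bool" where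
  "PC_free H \<longleftrightarrow> \<not> contains_P H \<and> \<not> contains_C H"

definition induced :: "'a set set \<Rightarrow> 'a set \<Rightarrow> 'a set set" where
  "induced H S = {h \<in> H. h \<subseteq> S}"

definition degree :: "'a set set \<Rightarrow> 'a \<Rightarrow> nat" where
  "degree H v = card {h \<in> H. v \<in> h}"

end

theory Submission
  imports Defs
begin

lemma P_lemma:
  assumes "A \<in> H" "B \<in> H" "C \<in> H" "card A = 3" "card B = 3" "card C = 3"
    "A \<inter> B = {c}" "B \<inter> C = {e}" "A \<inter> C = {}"
  shows "contains_P H"
proof -
  have c: "c \<in> A" "c \<in> B" and e: "e \<in> B" "e \<in> C" using assms(7,8) by blast+
  have ce: "c \<noteq> e" using assms(9) c e by blast
  have fA: "finite A" using assms(4) card.infinite by fastforce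
  have fB: "finite B" using assms(5) card.infinite by fastforce
  have fC: "finite C" using assms(6) card.infinite by fastforce
  have "card (A - {c}) = 2" using assms(4) c fA by simp
  then obtain a b where ab: "A - {c} = {a,b}" "a \<noteq> b" by (auto simp: card_2_iff)
  have Aeq: "A = {a,b,c}" using ab c by blast
  have "card (B - {c,e}) = 1" using assms(5) c e ce fB by (simp add: card_Diff_subset)
  then obtain d where d: "B - {c,e} = {d}" by (auto simp: card_1_singleton_iff)
  have Beq: "B = {c,d,e}" using d c e by blast
  have "card (C - {e}) = 2" using assms(6) e fC by simp
  then obtain f g where fg: "C - {e} = {f,g}" "f \<noteq> g" by (auto simp: card_2_iff)
  have Ceq: "C = {e,f,g}" using fg e by blast
  have a1: "a \<notin> B" "b \<notin> B" "a \<notin> C" "b \<notin> C" "a \<noteq> c" "b \<noteq> c"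
    using ab assms(7,9) by blast+
  have d1: "d \<notin> A" "d \<notin> C" "d \<noteq> c" "d \<noteq> e" using d assms(7,8) by blast+
  have f1: "f \<notin> A" "g \<notin> A" "f \<notin> B" "g \<notin> B" "f \<noteq> e" "g \<noteq> e"
    using fg assms(8,9) by blast+
  have "distinct [a,b,c,d,e,f,g]"
    using a1 d1 f1 ab(2) fg(2) ce c e Aeq Beq Ceq by (simp; blast)
  then show ?thesis unfolding contains_P_def
    using assms(1,2,3) Aeq Beq Ceq by blast
qed

lemma C_lemma:
  assumes "A \<in> H" "B \<in> H" "C \<in> H" "card A = 3" "card B = 3" "card C = 3"
    "A \<inter> B = {p}" "B \<inter> C = {q}" "A \<inter> C = {r}" "p \<noteq> q" "q \<noteq> r" "p \<noteq> r"
  shows "contains_C H"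
proof -
  have fA: "finite A" using assms(4) card.infinite by fastforce
  have fB: "finite B" using assms(5) card.infinite by fastforce
  have fC: "finite C" using assms(6) card.infinite by fastforce
  have pA: "p \<in> A" "r \<in> A" "p \<in> B" "q \<in> B" "q \<in> C" "r \<in> C" using assms(7,8,9) by blast+
  have "card (A - {p,r}) = 1" using assms(4,12) pA fA by (simp add: card_Diff_subset)
  then obtain y3 where y3: "A - {p,r} = {y3}" by (auto simp: card_1_singleton_iff)
  have "card (B - {p,q}) = 1" using assms(5,10) pA fB by (simp add: card_Diff_subset)
  then obtain y1 where y1: "B - {p,q} = {y1}" by (auto simp: card_1_singleton_iff)
  have "card (C - {q,r}) = 1" using assms(6,11) pA fC by (simp add: card_Diff_subset)
  then obtain y2 where y2: "C - {q,r} = {y2}" by (auto simp: card_1_singleton_iff)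
  have Aeq: "A = {r,y3,p}" using y3 pA by blast
  have Beq: "B = {p,y1,q}" using y1 pA by blast
  have Ceq: "C = {q,y2,r}" using y2 pA by blast
  have z: "y3 \<notin> B" "y3 \<notin> C" "y3 \<noteq> p" "y3 \<noteq> r" using y3 assms(7,9) by blast+
  have z1: "y1 \<notin> A" "y1 \<notin> C" "y1 \<noteq> p" "y1 \<noteq> q" using y1 assms(7,8) by blast+
  have z2: "y2 \<notin> A" "y2 \<notin> B" "y2 \<noteq> q" "y2 \<noteq> r" using y2 assms(8,9) by blast+
  have z3: "y1 \<in> B" "y2 \<in> C" "y3 \<in> A" using y1 y2 y3 by blast+
  have "distinct [r,p,q,y1,y2,y3]"
    using z z1 z2 z3 pA assms(10-12) by auto
  then show ?thesis unfolding contains_C_def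
    using assms(1,2,3) Aeq Beq Ceq by blast
qed

theorem mainTheorem10:
  fixes V :: "'a set" and H :: "'a set set" and e1 e2 :: "'a set" and x :: 'a
  assumes "three_graph V H"
    and "PC_free H"
    and "e1 \<in> H" and "e2 \<in> H" and "e1 \<inter> e2 = {x}"
    and "U = e1 \<union> e2" and "W = V - U"
    and "induced H W \<noteq> {}"
    and "W0 = {v \<in> W. degree (induced H W) v = 0}"
    and "W1 = W - W0"
    and "H1 = {h \<in> H. h \<inter> U \<noteq> {} \<and> h \<inter> W \<noteq> {} \<and> h \<inter> W \<subseteq> W1}"
  shows "card H1 + 3 \<le> 2 * card W1
     \<and> (card W1 \<ge> 4 \<longrightarrow> card (induced H U) + card H1 \<le> 2 * card W1 + 2)"
proof -
  have fV: "finite V" and hV: "\<And>h. h \<in> H \<Longrightarrow> h \<subseteq> V \<and> card h = 3"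
    using assms(1) unfolding three_graph_def by auto
  have fH: "finite H"
  proof -
    have "H \<subseteq> Pow V" using hV by blast
    moreover have "finite (Pow V)" using fV by simp
    ultimately show ?thesis by (rule finite_subset)
  qed
  have nP: "\<not> contains_P H" and nC: "\<not> contains_C H" using assms(2) unfolding PC_free_def by auto
  have c3: "\<And>h. h \<in> H \<Longrightarrow> card h = 3" using hV by blast
  have Pf: "\<And>A B C c e. A \<in> H \<Longrightarrow> B \<in> H \<Longrightarrow> C \<in> H \<Longrightarrow> A \<inter> B = {c} \<Longrightarrow> B \<inter> C = {e}
     \<Longrightarrow> A \<inter> C = {} \<Longrightarrow> False"
    using P_lemma c3 nP by metis
  have Cf: "\<And>A B C p q r. A \<in> H \<Longrightarrow> B \<in> H \<Longrightarrow> C \<in> H \<Longrightarrow> A \<inter> B = {p} \<Longrightarrow> B \<inter> C = {q}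
     \<Longrightarrow> A \<inter> C = {r} \<Longrightarrow> p \<noteq> q \<Longrightarrow> q \<noteq> r \<Longrightarrow> p \<noteq> r \<Longrightarrow> False"
    using C_lemma c3 nC by metis
  have x1: "x \<in> e1" "x \<in> e2" using assms(5) by blast+
  have fe1: "finite e1" using hV assms(3) fV finite_subset by blast
  have fe2: "finite e2" using hV assms(4) fV finite_subset by blast
  have "card (e1 - {x}) = 2" using c3[OF assms(3)] x1 fe1 by simp
  then obtain a1 a2 where a12: "e1 - {x} = {a1,a2}" "a1 \<noteq> a2" by (auto simp: card_2_iff)
  have "card (e2 - {x}) = 2" using c3[OF assms(4)] x1 fe2 by simp
  then obtain b1 b2 where b12: "e2 - {x} = {b1,b2}" "b1 \<noteq> b2" by (auto simp: card_2_iff)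
  have e1eq: "e1 = {x,a1,a2}" using a12 x1 by blast
  have e2eq: "e2 = {x,b1,b2}" using b12 x1 by blast
  have dist: "x \<noteq> a1" "x \<noteq> a2" "x \<noteq> b1" "x \<noteq> b2" "a1 \<noteq> b1" "a1 \<noteq> b2" "a2 \<noteq> b1" "a2 \<noteq> b2"
    using a12 b12 assms(5) by blast+
  have Ueq: "U = {x,a1,a2,b1,b2}" using assms(6) e1eq e2eq by blast
  have UV: "U \<subseteq> V" using assms(3,4,6) hV by blast
  have WU: "W \<inter> U = {}" and WV: "W \<subseteq> V" using assms(7) by blast+
  have VUW: "V = U \<union> W" using UV assms(7) by blast
  have Wn: "\<And>w. w \<in> W \<Longrightarrow> w \<noteq> x \<and> w \<noteq> a1 \<and> w \<noteq> a2 \<and> w \<noteq> b1 \<and> w \<noteq> b2"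
    using WU Ueq by blast
  have deg0: "\<And>w. degree (induced H W) w = 0 \<longleftrightarrow> \<not> (\<exists>f\<in>H. f \<subseteq> W \<and> w \<in> f)"
  proof -
    fix w
    have "finite {h \<in> induced H W. w \<in> h}" using fH by (simp add: induced_def)
    then show "degree (induced H W) w = 0 \<longleftrightarrow> \<not> (\<exists>f\<in>H. f \<subseteq> W \<and> w \<in> f)"
      by (auto simp: degree_def induced_def)
  qed
  have W1char: "\<And>w. w \<in> W1 \<longleftrightarrow> w \<in> W \<and> (\<exists>f\<in>H. f \<subseteq> W \<and> w \<in> f)"
    using deg0 assms(9,10) by blast
  have fW1: "finite W1" using W1char WV fV finite_subset by (metis subsetI)
  obtain f0 where f0: "f0 \<in> H" "f0 \<subseteq> W" using assms(8) unfolding induced_def by blast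
  have f0W1: "f0 \<subseteq> W1" using f0 W1char by blast
  have k3: "card W1 \<ge> 3" using card_mono[OF fW1 f0W1] c3[OF f0(1)] by simp
  have classify: "\<And>h. h \<in> H1 \<Longrightarrow> (\<exists>w\<in>W1. h = {a1,a2,w}) \<or> (\<exists>w\<in>W1. h = {b1,b2,w})
       \<or> (\<exists>w w'. w \<in> W1 \<and> w' \<in> W1 \<and> w \<noteq> w' \<and> h = {x,w,w'})"
  proof -
    fix h assume hH1: "h \<in> H1"
    then have hH: "h \<in> H" and hU: "h \<inter> U \<noteq> {}" and hW: "h \<inter> W \<noteq> {}" and hW1: "h \<inter> W \<subseteq> W1"
      using assms(11) by auto
    have hsub: "h \<subseteq> V" "card h = 3" using hV hH by auto
    have fh: "finite h" using hsub fV finite_subset by blast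
    define I where "I = h \<inter> U"
    define J where "J = h \<inter> W"
    have hIJ: "h = I \<union> J" using hsub VUW by (auto simp: I_def J_def)
    have dIJ: "I \<inter> J = {}" using WU by (auto simp: I_def J_def)
    have fI: "finite I" "finite J" using fh by (auto simp: I_def J_def)
    have cIJ: "card I + card J = 3" using card_Un_disjoint[OF fI dIJ] hIJ hsub by simp
    have "card I \<noteq> 0" "card J \<noteq> 0" using fI hU hW by (auto simp: I_def J_def)
    then have "card I = 1 \<or> card I = 2" using cIJ by arith
    then show "(\<exists>w\<in>W1. h = {a1,a2,w}) \<or> (\<exists>w\<in>W1. h = {b1,b2,w})
       \<or> (\<exists>w w'. w \<in> W1 \<and> w' \<in> W1 \<and> w \<noteq> w' \<and> h = {x,w,w'})"
    proof
      assume cI: "card I = 1"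
      then obtain u where I: "I = {u}" by (auto simp: card_1_singleton_iff)
      have "card J = 2" using cI cIJ by simp
      then obtain w w' where J: "J = {w,w'}" "w \<noteq> w'" by (auto simp: card_2_iff)
      have uU: "u \<in> U" using I by (auto simp: I_def)
      have wW: "w \<in> W" "w' \<in> W" "w \<in> W1" "w' \<in> W1" using J hW1 by (auto simp: J_def)
      have heq: "h = {u,w,w'}" using hIJ I J by auto
      have "u = x"
      proof (rule ccontr)
        assume "u \<noteq> x"
        then have "u \<in> {a1,a2} \<or> u \<in> {b1,b2}" using uU Ueq by auto
        then show False
        proof
          assume u: "u \<in> {a1,a2}"
          have "h \<inter> e1 = {u}" using heq e1eq u Wn[OF wW(1)] Wn[OF wW(2)] by auto
          moreover have "h \<inter> e2 = {}" using heq e2eq u Wn[OF wW(1)] Wn[OF wW(2)] dist by auto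
          ultimately show False using Pf[OF hH assms(3) assms(4) _ assms(5)] by blast
        next
          assume u: "u \<in> {b1,b2}"
          have "h \<inter> e2 = {u}" using heq e2eq u Wn[OF wW(1)] Wn[OF wW(2)] by auto
          moreover have "h \<inter> e1 = {}" using heq e1eq u Wn[OF wW(1)] Wn[OF wW(2)] dist by auto
          moreover have "e2 \<inter> e1 = {x}" using assms(5) by blast
          ultimately show False using Pf[OF hH assms(4) assms(3)] by blast
        qed
      qed
      then show ?thesis using heq wW J(2) by blast
    next
      assume cI: "card I = 2"
      then obtain u v where I: "I = {u,v}" "u \<noteq> v" by (auto simp: card_2_iff)
      have "card J = 1" using cI cIJ by simp
      then obtain w where J: "J = {w}" by (auto simp: card_1_singleton_iff)
      have uU: "u \<in> U" "v \<in> U" using I by (auto simp: I_def)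
      have wW: "w \<in> W" "w \<in> W1" using J hW1 by (auto simp: J_def)
      obtain f where f: "f \<in> H" "f \<subseteq> W" "w \<in> f" using wW W1char by blast
      have heq: "h = {u,v,w}" using hIJ I J by auto
      have fh1: "f \<inter> h = {w}" using f J heq by (auto simp: J_def)
      have fe1: "f \<inter> e1 = {}" "f \<inter> e2 = {}" using f WU assms(6) by blast+
      have wn: "w \<notin> e1" "w \<notin> e2" using wW WU assms(6) by blast+
      have nxa: "\<And>a. a \<in> {a1,a2} \<Longrightarrow> x \<in> I \<Longrightarrow> a \<in> I \<Longrightarrow> False"
      proof -
        fix a assume a: "a \<in> {a1,a2}" "x \<in> I" "a \<in> I"
        have "h = {x,a,w}" using heq I a dist by auto
        then have "h \<inter> e2 = {x}" using a e2eq wn dist by auto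
        then show False using Pf[OF f(1) hH assms(4) fh1 _ fe1(2)] by blast
      qed
      have nxb: "\<And>a. a \<in> {b1,b2} \<Longrightarrow> x \<in> I \<Longrightarrow> a \<in> I \<Longrightarrow> False"
      proof -
        fix a assume a: "a \<in> {b1,b2}" "x \<in> I" "a \<in> I"
        have "h = {x,a,w}" using heq I a dist by auto
        then have "h \<inter> e1 = {x}" using a e1eq wn dist by auto
        then show False using Pf[OF f(1) hH assms(3) fh1 _ fe1(1)] by blast
      qed
      have nab: "\<And>a b. a \<in> {a1,a2} \<Longrightarrow> b \<in> {b1,b2} \<Longrightarrow> a \<in> I \<Longrightarrow> b \<in> I \<Longrightarrow> False"
      proof -
        fix a b assume a: "a \<in> {a1,a2}" "b \<in> {b1,b2}" "a \<in> I" "b \<in> I"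
        have ab: "a \<noteq> b" "a \<noteq> x" "b \<noteq> x" using a dist by auto
        have "h = {a,b,w}" using heq I a ab by auto
        then have "h \<inter> e1 = {a}" "h \<inter> e2 = {b}" using a e1eq e2eq wn dist by auto
        then show False using Cf[OF hH assms(3) assms(4) _ assms(5)] ab by blast
      qed
      have "I = {a1,a2} \<or> I = {b1,b2}"
      proof -
        have "u \<in> {x,a1,a2,b1,b2}" "v \<in> {x,a1,a2,b1,b2}" using uU Ueq by auto
        then show ?thesis using I nxa nxb nab dist a12(2) b12(2) by auto
      qed
      then show ?thesis using hIJ J wW by auto
    qed
  qed
  have F1: "\<And>w w'. {x,w,w'} \<in> H \<Longrightarrow> w \<in> W \<Longrightarrow> w' \<in> W \<Longrightarrow> w \<noteq> w'
      \<Longrightarrow> {a1,a2,w} \<notin> H \<and> {b1,b2,w} \<notin> H"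
  proof -
    fix w w' assume X: "{x,w,w'} \<in> H" "w \<in> W" "w' \<in> W" "w \<noteq> w'"
    note n = Wn[OF X(2)] Wn[OF X(3)]
    have i1: "e2 \<inter> {x,w,w'} = {x}" "e1 \<inter> {x,w,w'} = {x}" using e1eq e2eq n by auto
    have i2: "{x,w,w'} \<inter> {a1,a2,w} = {w}" "{x,w,w'} \<inter> {b1,b2,w} = {w}" using n X(4) dist by auto
    have i3: "e2 \<inter> {a1,a2,w} = {}" "e1 \<inter> {b1,b2,w} = {}" using e1eq e2eq n dist by auto
    show "{a1,a2,w} \<notin> H \<and> {b1,b2,w} \<notin> H"
      using Pf[OF assms(4) X(1) _ i1(1) i2(1) i3(1)] Pf[OF assms(3) X(1) _ i1(2) i2(2) i3(2)] by blast
  qed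
  have F2: "\<And>w w' f. {x,w,w'} \<in> H \<Longrightarrow> w \<in> W \<Longrightarrow> w' \<in> W \<Longrightarrow> w \<noteq> w'
      \<Longrightarrow> f \<in> H \<Longrightarrow> f \<subseteq> W \<Longrightarrow> w \<in> f \<Longrightarrow> w' \<in> f"
  proof (rule ccontr)
    fix w w' f assume X: "{x,w,w'} \<in> H" "w \<in> W" "w' \<in> W" "w \<noteq> w'" "f \<in> H" "f \<subseteq> W" "w \<in> f"
      "w' \<notin> f"
    have xf: "x \<notin> f" using X(6) Wn by blast
    have i1: "f \<inter> {x,w,w'} = {w}" using X xf by auto
    have i2: "{x,w,w'} \<inter> e1 = {x}" using e1eq Wn[OF X(2)] Wn[OF X(3)] by auto
    have i3: "f \<inter> e1 = {}" using X(6) WU assms(6) by blast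
    show False using Pf[OF X(5) X(1) assms(3) i1 i2 i3] .
  qed
  have F3: "\<And>w y f. {a1,a2,w} \<in> H \<Longrightarrow> {b1,b2,y} \<in> H \<Longrightarrow> w \<noteq> y
      \<Longrightarrow> f \<in> H \<Longrightarrow> f \<subseteq> W \<Longrightarrow> w \<in> f \<Longrightarrow> y \<in> f \<Longrightarrow> False"
  proof -
    fix w y f assume A: "{a1,a2,w} \<in> H" "{b1,b2,y} \<in> H" "w \<noteq> y" "f \<in> H" "f \<subseteq> W" "w \<in> f" "y \<in> f"
    have n: "\<And>v. v \<in> f \<Longrightarrow> v \<noteq> x \<and> v \<noteq> a1 \<and> v \<noteq> a2 \<and> v \<noteq> b1 \<and> v \<noteq> b2" using A(5) Wn by blast
    have i1: "{a1,a2,w} \<inter> f = {w}" using n A(6) by auto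
    have i2: "f \<inter> {b1,b2,y} = {y}" using n A(7) by auto
    have i3: "{a1,a2,w} \<inter> {b1,b2,y} = {}" using n[OF A(6)] n[OF A(7)] A(3) dist by auto
    show False using Pf[OF A(1) A(4) A(2) i1 i2 i3] .
  qed
  define SA where "SA = {w \<in> W1. {a1,a2,w} \<in> H}"
  define SB where "SB = {w \<in> W1. {b1,b2,w} \<in> H}"
  define XE where "XE = {h \<in> H1. x \<in> h}"
  define D where "D = {w \<in> W1. \<exists>h\<in>XE. w \<in> h}"
  define d where "d = (\<lambda>w. card {h \<in> XE. w \<in> h})"
  have fSA: "finite SA" "finite SB" "finite D" using fW1 by (auto simp: SA_def SB_def D_def)
  have fXE: "finite XE" using fH assms(11) by (auto simp: XE_def)
  have XEform: "\<And>h. h \<in> XE \<Longrightarrow> \<exists>w w'. w \<in> W1 \<and> w' \<in> W1 \<and> w \<noteq> w' \<and> h = {x,w,w'}"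
  proof -
    fix h assume h: "h \<in> XE"
    then have "h \<in> H1" "x \<in> h" by (auto simp: XE_def)
    moreover have "\<And>w. w \<in> W1 \<Longrightarrow> x \<notin> {a1,a2,w} \<and> x \<notin> {b1,b2,w}"
      using W1char Wn dist by blast
    ultimately show "\<exists>w w'. w \<in> W1 \<and> w' \<in> W1 \<and> w \<noteq> w' \<and> h = {x,w,w'}"
      using classify by metis
  qed
  have XEH: "\<And>h. h \<in> XE \<Longrightarrow> h \<in> H" using assms(11) by (auto simp: XE_def)
  have H1sub: "H1 \<subseteq> (\<lambda>w. {a1,a2,w}) ` SA \<union> (\<lambda>w. {b1,b2,w}) ` SB \<union> XE"
  proof
    fix h assume h: "h \<in> H1"
    then have hH: "h \<in> H" using assms(11) by blast
    show "h \<in> (\<lambda>w. {a1,a2,w}) ` SA \<union> (\<lambda>w. {b1,b2,w}) ` SB \<union> XE"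
      using classify[OF h] hH h by (auto simp: SA_def SB_def XE_def)
  qed
  have cH1: "card H1 \<le> card SA + card SB + card XE"
  proof -
    have "card H1 \<le> card ((\<lambda>w. {a1,a2,w}) ` SA \<union> (\<lambda>w. {b1,b2,w}) ` SB \<union> XE)"
      using card_mono[OF _ H1sub] fSA fXE by blast
    also have "\<dots> \<le> card ((\<lambda>w. {a1,a2,w}) ` SA) + card ((\<lambda>w. {b1,b2,w}) ` SB) + card XE"
      by (meson add_mono_thms_linordered_semiring(3) card_Un_le le_trans)
    also have "\<dots> \<le> card SA + card SB + card XE"
      using card_image_le[OF fSA(1)] card_image_le[OF fSA(2)] by (meson add_mono le_refl)
    finally show ?thesis .
  qed
  have dsum: "2 * card XE = sum d D"
  proof -
    have XW: "\<And>h. h \<in> XE \<Longrightarrow> card (h \<inter> W) = 2 \<and> h \<inter> W \<subseteq> D"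
    proof -
      fix h assume h: "h \<in> XE"
      obtain w w' where ww: "w \<in> W1" "w' \<in> W1" "w \<noteq> w'" "h = {x,w,w'}" using XEform[OF h] by blast
      have wW: "w \<in> W" "w' \<in> W" using ww(1,2) assms(10) by auto
      have "h \<inter> W = {w,w'}" using ww(4) wW Wn by auto
      moreover have "{w,w'} \<subseteq> D" using h ww unfolding D_def by auto
      ultimately show "card (h \<inter> W) = 2 \<and> h \<inter> W \<subseteq> D" using ww(3) by simp
    qed
    have fin2: "\<And>h. h \<in> XE \<Longrightarrow> finite (h \<inter> W)" by (meson XW fSA(3) finite_subset)
    have "card (Sigma XE (\<lambda>h. h \<inter> W)) = sum (\<lambda>h. card (h \<inter> W)) XE"
      using fin2 by (intro card_SigmaI[OF fXE]) blast
    also have "\<dots> = sum (\<lambda>h. 2) XE" using XW by (intro sum.cong) auto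
    also have "\<dots> = 2 * card XE" by simp
    finally have e1: "card (Sigma XE (\<lambda>h. h \<inter> W)) = 2 * card XE" .
    have DW: "D \<subseteq> W" unfolding D_def using assms(10) by blast
    have "Sigma D (\<lambda>w. {h \<in> XE. w \<in> h}) = (\<lambda>(h,w). (w,h)) ` Sigma XE (\<lambda>h. h \<inter> W)"
    proof
      show "Sigma D (\<lambda>w. {h \<in> XE. w \<in> h}) \<subseteq> (\<lambda>(h,w). (w,h)) ` Sigma XE (\<lambda>h. h \<inter> W)"
      proof
        fix p assume p: "p \<in> Sigma D (\<lambda>w. {h \<in> XE. w \<in> h})"
        then obtain w h where wh: "p = (w,h)" "w \<in> D" "h \<in> XE" "w \<in> h" by blast
        then have "(h,w) \<in> Sigma XE (\<lambda>h. h \<inter> W)" using DW by blast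
        then show "p \<in> (\<lambda>(h,w). (w,h)) ` Sigma XE (\<lambda>h. h \<inter> W)"
          using wh(1) by (auto intro!: image_eqI[where x="(h,w)"])
      qed
      show "(\<lambda>(h,w). (w,h)) ` Sigma XE (\<lambda>h. h \<inter> W) \<subseteq> Sigma D (\<lambda>w. {h \<in> XE. w \<in> h})"
      proof
        fix p assume "p \<in> (\<lambda>(h,w). (w,h)) ` Sigma XE (\<lambda>h. h \<inter> W)"
        then obtain q where q: "q \<in> Sigma XE (\<lambda>h. h \<inter> W)" "p = (\<lambda>(h,w). (w,h)) q" by blast
        obtain h w where "q = (h,w)" by (cases q)
        then have hw: "p = (w,h)" "h \<in> XE" "w \<in> h \<inter> W" using q by auto
        then have "w \<in> D" using XW by blast
        then show "p \<in> Sigma D (\<lambda>w. {h \<in> XE. w \<in> h})" using hw by blast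
      qed
    qed
    moreover have "inj_on (\<lambda>(h,w). (w,h)) (Sigma XE (\<lambda>h. h \<inter> W))"
      by (auto simp: inj_on_def)
    ultimately have "card (Sigma D (\<lambda>w. {h \<in> XE. w \<in> h})) = 2 * card XE"
      using e1 card_image by metis
    moreover have "card (Sigma D (\<lambda>w. {h \<in> XE. w \<in> h})) = sum d D"
      unfolding d_def using fXE by (intro card_SigmaI[OF fSA(3)]) simp
    ultimately show ?thesis by simp
  qed
  have XEdecomp: "\<And>h w. h \<in> XE \<Longrightarrow> w \<in> h \<Longrightarrow> w \<noteq> x \<Longrightarrow>
      \<exists>w'. w' \<in> W \<and> w' \<noteq> w \<and> w \<in> W \<and> h = {x,w,w'}"
  proof -
    fix h w assume h: "h \<in> XE" "w \<in> h" "w \<noteq> x"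
    obtain u u' where uu: "u \<in> W1" "u' \<in> W1" "u \<noteq> u'" "h = {x,u,u'}" using XEform[OF h(1)] by blast
    have uW: "u \<in> W" "u' \<in> W" using uu(1,2) assms(10) by auto
    have "w = u \<or> w = u'" using h uu(4) by auto
    then show "\<exists>w'. w' \<in> W \<and> w' \<noteq> w \<and> w \<in> W \<and> h = {x,w,w'}"
    proof
      assume "w = u" then show ?thesis using uu uW by blast
    next
      assume "w = u'" then have "h = {x,w,u}" using uu(4) by auto
      then show ?thesis using uu uW \<open>w = u'\<close> by blast
    qed
  qed
  have DW1: "D \<subseteq> W1" unfolding D_def by blast
  have xW1: "x \<notin> W1" using W1char Wn by blast
  have d2: "\<And>w. w \<in> W1 \<Longrightarrow> d w \<le> 2"
  proof -
    fix w assume w: "w \<in> W1"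
    then obtain f where f: "f \<in> H" "f \<subseteq> W" "w \<in> f" using W1char by blast
    have wx: "w \<noteq> x" using w xW1 by blast
    have "{h \<in> XE. w \<in> h} \<subseteq> (\<lambda>w'. {x,w,w'}) ` (f - {w})"
    proof
      fix h assume h: "h \<in> {h \<in> XE. w \<in> h}"
      then obtain w' where w': "w' \<in> W" "w' \<noteq> w" "w \<in> W" "h = {x,w,w'}" using XEdecomp wx by blast
      have "w' \<in> f" using F2[of w w' f] XEH h w' f by auto
      then show "h \<in> (\<lambda>w'. {x,w,w'}) ` (f - {w})" using w' by blast
    qed
    moreover have "finite f" using c3[OF f(1)] card.infinite by fastforce
    ultimately have "d w \<le> card (f - {w})" unfolding d_def
      by (meson card_image_le card_mono finite_Diff finite_imageI le_trans)
    also have "card (f - {w}) = 2" using c3[OF f(1)] f(3) \<open>finite f\<close> by simp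
    finally show "d w \<le> 2" .
  qed
  have d1: "\<And>w0 f y. w0 \<in> SA \<union> SB \<Longrightarrow> f \<in> H \<Longrightarrow> f \<subseteq> W \<Longrightarrow> w0 \<in> f \<Longrightarrow> y \<in> f \<Longrightarrow> y \<noteq> w0
      \<Longrightarrow> d y \<le> 1"
  proof -
    fix w0 f y assume a: "w0 \<in> SA \<union> SB" "f \<in> H" "f \<subseteq> W" "w0 \<in> f" "y \<in> f" "y \<noteq> w0"
    have yx: "y \<noteq> x" using a(3,5) Wn by blast
    have w0H: "{a1,a2,w0} \<in> H \<or> {b1,b2,w0} \<in> H" using a(1) by (auto simp: SA_def SB_def)
    have "{h \<in> XE. y \<in> h} \<subseteq> (\<lambda>w'. {x,y,w'}) ` (f - {y,w0})"
    proof
      fix h assume h: "h \<in> {h \<in> XE. y \<in> h}"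
      then obtain w' where w': "w' \<in> W" "w' \<noteq> y" "y \<in> W" "h = {x,y,w'}" using XEdecomp yx by blast
      have hH: "{x,y,w'} \<in> H" using XEH h w' by auto
      have "w' \<in> f" using F2[of y w' f] hH w' a by auto
      moreover have "w' \<noteq> w0"
      proof
        assume "w' = w0"
        then have "{x,w0,y} \<in> H" using hH by (simp add: insert_commute)
        then show False using F1[of w0 y] w' a(6) w0H \<open>w' = w0\<close> by blast
      qed
      ultimately show "h \<in> (\<lambda>w'. {x,y,w'}) ` (f - {y,w0})" using w' by blast
    qed
    moreover have ff: "finite f" using c3[OF a(2)] card.infinite by fastforce
    ultimately have "d y \<le> card (f - {y,w0})" unfolding d_def
      by (meson card_image_le card_mono finite_Diff finite_imageI le_trans)
    also have "card (f - {y,w0}) = 1" using c3[OF a(2)] a(4,5,6) ff by (simp add: card_Diff_subset)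
    finally show "d y \<le> 1" .
  qed
  have Ddisj: "D \<inter> (SA \<union> SB) = {}"
  proof (rule ccontr)
    assume "D \<inter> (SA \<union> SB) \<noteq> {}"
    then obtain w where w: "w \<in> D" "w \<in> SA \<union> SB" by blast
    then obtain h where h: "h \<in> XE" "w \<in> h" unfolding D_def by blast
    have wx: "w \<noteq> x" using w(1) DW1 xW1 by blast
    obtain w' where w': "w' \<in> W" "w' \<noteq> w" "w \<in> W" "h = {x,w,w'}" using XEdecomp[OF h wx] by blast
    have "{x,w,w'} \<in> H" using XEH h w' by auto
    then show False using F1[of w w'] w' w(2) by (auto simp: SA_def SB_def)
  qed
  have sumD2: "sum d D \<le> 2 * card D"
    using sum_bounded_above[of D d 2] d2 DW1 by (auto simp: mult.commute)
  have nodouble: "SA \<inter> SB = {} \<Longrightarrow> card H1 \<le> card W1"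
  proof -
    assume nd: "SA \<inter> SB = {}"
    have "card SA + card SB = card (SA \<union> SB)" using card_Un_disjoint[OF fSA(1,2) nd] by simp
    moreover have "card (SA \<union> SB) + card D = card (SA \<union> SB \<union> D)"
      using card_Un_disjoint[of "SA \<union> SB" D] fSA Ddisj by (simp add: Int_commute)
    moreover have "card (SA \<union> SB \<union> D) \<le> card W1"
      using fW1 DW1 by (intro card_mono) (auto simp: SA_def SB_def)
    ultimately show ?thesis using cH1 dsum sumD2 by linarith
  qed
  have part1: "card H1 + 3 \<le> 2 * card W1"
  proof (cases "SA \<inter> SB = {}")
    case True
    then show ?thesis using nodouble k3 by linarith
  next
    case False
    then obtain w0 where w0: "w0 \<in> SA" "w0 \<in> SB" by blast
    then have "w0 \<in> W1" by (simp add: SA_def)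
    then obtain f where f: "f \<in> H" "f \<subseteq> W" "w0 \<in> f" using W1char by blast
    define Y where "Y = f - {w0}"
    have ff: "finite f" using c3[OF f(1)] card.infinite by fastforce
    have cY: "card Y = 2" using c3[OF f(1)] f(3) ff by (simp add: Y_def)
    have fY: "finite Y" using ff by (simp add: Y_def)
    have YW1: "Y \<subseteq> W1" using f W1char by (auto simp: Y_def)
    have YS: "Y \<inter> (SA \<union> SB) = {}"
    proof (rule ccontr)
      assume "Y \<inter> (SA \<union> SB) \<noteq> {}"
      then obtain y where y: "y \<in> Y" "y \<in> SA \<union> SB" by blast
      have "y \<noteq> w0" "y \<in> f" using y(1) by (auto simp: Y_def)
      then show False using y(2) w0 F3[of w0 y f] F3[of y w0 f] f by (auto simp: SA_def SB_def)
    qed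
    have dY: "\<And>y. y \<in> Y \<Longrightarrow> d y \<le> 1"
      using d1[of w0 f] w0 f by (auto simp: Y_def)
    have "sum d D = sum d (D \<inter> Y) + sum d (D - Y)"
      by (rule sum.Int_Diff[OF fSA(3)])
    also have "\<dots> \<le> card (D \<inter> Y) + 2 * card (D - Y)"
    proof (rule add_mono)
      show "sum d (D \<inter> Y) \<le> card (D \<inter> Y)"
        using sum_bounded_above[of "D \<inter> Y" d 1] dY by auto
      show "sum d (D - Y) \<le> 2 * card (D - Y)"
        using sum_bounded_above[of "D - Y" d 2] d2 DW1 by (auto simp: mult.commute)
    qed
    finally have sD: "sum d D \<le> card (D \<inter> Y) + 2 * card (D - Y)" .
    have cD: "card D = card (D \<inter> Y) + card (D - Y)"
      by (rule card_Int_Diff[OF fSA(3)])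
    have cY2: "card (D \<inter> Y) + card (Y - D) = 2"
      using card_Int_Diff[OF fY, of D] cY by (simp add: Int_commute)
    have disj3: "card (SA \<union> SB) + card D + card (Y - D) \<le> card W1"
    proof -
      have "card (SA \<union> SB) + card D = card (SA \<union> SB \<union> D)"
        using card_Un_disjoint[of "SA \<union> SB" D] fSA Ddisj by (simp add: Int_commute)
      moreover have "card (SA \<union> SB \<union> D) + card (Y - D) = card (SA \<union> SB \<union> D \<union> (Y - D))"
      proof -
        have "(SA \<union> SB \<union> D) \<inter> (Y - D) = {}" using YS by blast
        then show ?thesis using card_Un_disjoint[of "SA \<union> SB \<union> D" "Y - D"] fSA fY by auto
      qed
      moreover have "card (SA \<union> SB \<union> D \<union> (Y - D)) \<le> card W1"
        using fW1 DW1 YW1 by (intro card_mono) (auto simp: SA_def SB_def)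
      ultimately show ?thesis by linarith
    qed
    have "card SA + card SB = card (SA \<union> SB) + card (SA \<inter> SB)"
      using card_Un_Int[OF fSA(1,2)] .
    moreover have "card (SA \<inter> SB) \<le> card (SA \<union> SB)"
      using fSA by (intro card_mono) auto
    ultimately show ?thesis using cH1 dsum sD cD cY2 disj3 by linarith
  qed
  have fU: "finite U" using finite_subset[OF UV fV] .
  have IUsub: "\<And>t. t \<in> induced H U \<Longrightarrow> t \<in> H \<and> t \<subseteq> U \<and> card t = 3 \<and> finite t"
  proof -
    fix t assume "t \<in> induced H U"
    then have t: "t \<in> H" "t \<subseteq> U" by (auto simp: induced_def)
    moreover have "finite t" using finite_subset[OF t(2) fU] .
    ultimately show "t \<in> H \<and> t \<subseteq> U \<and> card t = 3 \<and> finite t" using c3 by blast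
  qed
  have cU: "card U = 5" using Ueq dist a12(2) b12(2) by simp
  have G0: "card (induced H U) \<le> 10"
  proof -
    have "induced H U \<subseteq> {t. t \<subseteq> U \<and> card t = 3}" using IUsub by blast
    then have "card (induced H U) \<le> card {t. t \<subseteq> U \<and> card t = 3}"
      using fU by (intro card_mono) auto
    also have "\<dots> = 10" using n_subsets[OF fU, of 3] cU by (simp add: numeral_eq_Suc)
    finally show ?thesis .
  qed
  have GA: "\<And>w f a1 a2 b1 b2. {x,a1,a2} \<in> H \<Longrightarrow> {x,b1,b2} \<in> H \<Longrightarrow> U = {x,a1,a2,b1,b2}
     \<Longrightarrow> a1 \<noteq> a2 \<Longrightarrow> b1 \<noteq> b2 \<Longrightarrow> x \<noteq> a1 \<Longrightarrow> x \<noteq> a2 \<Longrightarrow> x \<noteq> b1 \<Longrightarrow> x \<noteq> b2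
     \<Longrightarrow> a1 \<noteq> b1 \<Longrightarrow> a1 \<noteq> b2 \<Longrightarrow> a2 \<noteq> b1 \<Longrightarrow> a2 \<noteq> b2
     \<Longrightarrow> {a1,a2,w} \<in> H \<Longrightarrow> f \<in> H \<Longrightarrow> f \<subseteq> W \<Longrightarrow> w \<in> f
     \<Longrightarrow> card (induced H U) \<le> 4"
  proof -
    fix w f a1 a2 b1 b2
    assume e: "{x,a1,a2} \<in> H" "{x,b1,b2} \<in> H" and Ue: "U = {x,a1,a2,b1,b2}"
      and ds: "a1 \<noteq> a2" "b1 \<noteq> b2" "x \<noteq> a1" "x \<noteq> a2" "x \<noteq> b1" "x \<noteq> b2"
      "a1 \<noteq> b1" "a1 \<noteq> b2" "a2 \<noteq> b1" "a2 \<noteq> b2"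
      and A: "{a1,a2,w} \<in> H" "f \<in> H" "f \<subseteq> W" "w \<in> f"
    have wU: "w \<notin> U" using A(3,4) WU by blast
    have fU0: "\<And>t. t \<subseteq> U \<Longrightarrow> f \<inter> t = {}" using A(3) WU by blast
    have fA: "f \<inter> {a1,a2,w} = {w}" using A(3,4) WU Ue by auto
    have sub: "induced H U \<subseteq> insert {x,b1,b2} ((\<lambda>c. {a1,a2,c}) ` {x,b1,b2})"
    proof
      fix t assume tI: "t \<in> induced H U"
      note tt = IUsub[OF tI]
      have wt: "w \<notin> t" using tt wU by blast
      have n1: "\<not> (a1 \<in> t \<and> a2 \<notin> t)"
      proof
        assume a: "a1 \<in> t \<and> a2 \<notin> t"
        have "{a1,a2,w} \<inter> t = {a1}" using a wt by auto
        then show False using Pf[OF A(2) A(1) _ fA _ fU0] tt by blast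
      qed
      have n2: "\<not> (a2 \<in> t \<and> a1 \<notin> t)"
      proof
        assume a: "a2 \<in> t \<and> a1 \<notin> t"
        have "{a1,a2,w} \<inter> t = {a2}" using a wt by auto
        then show False using Pf[OF A(2) A(1) _ fA _ fU0] tt by blast
      qed
      show "t \<in> insert {x,b1,b2} ((\<lambda>c. {a1,a2,c}) ` {x,b1,b2})"
      proof (cases "a1 \<in> t")
        case True
        then have a2t: "a2 \<in> t" using n1 by blast
        have "t - {a1,a2} \<noteq> {}"
        proof
          assume "t - {a1,a2} = {}"
          then have "t \<subseteq> {a1,a2}" by blast
          then have "card t \<le> 2" by (metis card_2_iff card_mono ds(1) finite.emptyI finite.insertI)
          then show False using tt by simp
        qed
        then obtain c where c: "c \<in> t" "c \<noteq> a1" "c \<noteq> a2" by blast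
        have sub3: "{a1,a2,c} \<subseteq> t" using c True a2t by blast
        have "card {a1,a2,c} = 3" using c ds by simp
        then have "{a1,a2,c} = t" using card_seteq[OF _ sub3] tt by simp
        moreover have "c \<in> {x,b1,b2}" using c tt Ue by blast
        ultimately show ?thesis by blast
      next
        case False
        then have "a2 \<notin> t" using n2 by blast
        then have sub3: "t \<subseteq> {x,b1,b2}" using False tt Ue by blast
        have "card {x,b1,b2} = 3" using ds by simp
        then have "t = {x,b1,b2}" using card_seteq[OF _ sub3] tt by simp
        then show ?thesis by blast
      qed
    qed
    have "card (insert {x,b1,b2} ((\<lambda>c. {a1,a2,c}) ` {x,b1,b2})) \<le> Suc (card ((\<lambda>c. {a1,a2,c}) ` {x,b1,b2}))"
      by (simp add: card_insert_le_m1)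
    also have "card ((\<lambda>c. {a1,a2,c}) ` {x,b1,b2}) \<le> card {x,b1,b2}" by (rule card_image_le) simp
    also have "card {x,b1,b2} = 3" using ds by simp
    finally have "card (insert {x,b1,b2} ((\<lambda>c. {a1,a2,c}) ` {x,b1,b2})) \<le> 4" by simp
    moreover have "card (induced H U) \<le> card (insert {x,b1,b2} ((\<lambda>c. {a1,a2,c}) ` {x,b1,b2}))"
      by (rule card_mono[OF _ sub]) simp
    ultimately show "card (induced H U) \<le> 4" by linarith
  qed
  have GX: "XE \<noteq> {} \<Longrightarrow> card (induced H U) \<le> 6"
  proof -
    assume "XE \<noteq> {}"
    then obtain h0 where h0: "h0 \<in> XE" by blast
    obtain w w' where ww: "w \<in> W1" "w' \<in> W1" "w \<noteq> w'" "h0 = {x,w,w'}" using XEform[OF h0] by blast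
    have wW: "w \<in> W" "w' \<in> W" using ww(1,2) assms(10) by auto
    have h0H: "h0 \<in> H" using XEH[OF h0] .
    have h0e: "h0 \<inter> e1 = {x}" "h0 \<inter> e2 = {x}" using ww(4) e1eq e2eq Wn[OF wW(1)] Wn[OF wW(2)] by auto
    define S2 where "S2 = {s. s \<subseteq> {a1,a2,b1,b2} \<and> card s = 2}"
    have sub: "induced H U \<subseteq> insert x ` S2"
    proof
      fix t assume tI: "t \<in> induced H U"
      note tt = IUsub[OF tI]
      have h0t: "x \<notin> t \<Longrightarrow> h0 \<inter> t = {}" using ww(4) tt wW WU by auto
      have gen: "\<And>e c c'. e \<in> H \<Longrightarrow> e = {x,c,c'} \<Longrightarrow> h0 \<inter> e = {x} \<Longrightarrow> x \<notin> t \<Longrightarrow> c \<in> t \<Longrightarrow> c' \<notin> t \<Longrightarrow> False"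
      proof -
        fix e c c' assume a: "e \<in> H" "e = {x,c,c'}" "h0 \<inter> e = {x}" "x \<notin> t" "c \<in> t" "c' \<notin> t"
        have "e \<inter> t = {c}" using a by auto
        then show False using Pf[OF h0H a(1) _ a(3) _ h0t[OF a(4)]] tt by blast
      qed
      have xt: "x \<in> t"
      proof (rule ccontr)
        assume xt: "x \<notin> t"
        have i1: "a1 \<in> t \<longleftrightarrow> a2 \<in> t"
          using gen[OF assms(3) e1eq h0e(1) xt] gen[of e1 a2 a1] assms(3) e1eq h0e(1) xt
          by (metis insert_commute)
        have i2: "b1 \<in> t \<longleftrightarrow> b2 \<in> t"
          using gen[OF assms(4) e2eq h0e(2) xt] gen[of e2 b2 b1] assms(4) e2eq h0e(2) xt
          by (metis insert_commute)
        have ts: "t \<subseteq> {a1,a2,b1,b2}" using tt Ueq xt by blast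
        show False
        proof (cases "a1 \<in> t")
          case True
          show False
          proof (cases "b1 \<in> t")
            case True
            then have "t = {a1,a2,b1,b2}" using ts i1 i2 \<open>a1 \<in> t\<close> by blast
            then show False using tt dist a12(2) b12(2) by simp
          next
            case False
            then have "t = {a1,a2}" using ts i1 i2 \<open>a1 \<in> t\<close> by blast
            then show False using tt by (simp add: card_insert_if split: if_splits)
          qed
        next
          case False
          show False
          proof (cases "b1 \<in> t")
            case True
            then have "t = {b1,b2}" using ts i1 i2 \<open>a1 \<notin> t\<close> by blast
            then show False using tt by (simp add: card_insert_if split: if_splits)
          next
            case False
            then have "t = {}" using ts i1 i2 \<open>a1 \<notin> t\<close> by blast
            then show False using tt by simp
          qed
        qed
      qed
      have "t - {x} \<in> S2" using tt xt Ueq unfolding S2_def by auto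
      moreover have "t = insert x (t - {x})" using xt by blast
      ultimately show "t \<in> insert x ` S2" by blast
    qed
    have "card (induced H U) \<le> card (insert x ` S2)"
      by (rule card_mono[OF _ sub]) (simp add: S2_def)
    also have "\<dots> \<le> card S2" by (rule card_image_le) (simp add: S2_def)
    also have "card S2 = 6"
    proof -
      have "card {a1,a2,b1,b2} = 4" using dist a12(2) b12(2) by simp
      then show ?thesis unfolding S2_def using n_subsets[of "{a1,a2,b1,b2}" 2]
        by (simp add: numeral_eq_Suc)
    qed
    finally show ?thesis .
  qed
  have part2: "card W1 \<ge> 4 \<Longrightarrow> card (induced H U) + card H1 \<le> 2 * card W1 + 2"
  proof -
    assume k4: "card W1 \<ge> 4"
    show ?thesis
    proof (cases "SA = {} \<and> SB = {}")
      case False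
      have "card (induced H U) \<le> 4"
      proof (cases "SA = {}")
        case False
        then obtain w where w: "w \<in> SA" by blast
        then have "w \<in> W1" "{a1,a2,w} \<in> H" by (auto simp: SA_def)
        then obtain f where f: "f \<in> H" "f \<subseteq> W" "w \<in> f" using W1char by blast
        show ?thesis using GA[of a1 a2 b1 b2 w f] assms(3,4) e1eq e2eq Ueq dist a12(2) b12(2)
            \<open>{a1,a2,w} \<in> H\<close> f by auto
      next
        case True
        then have "SB \<noteq> {}" using False by blast
        then obtain w where w: "w \<in> SB" by blast
        then have "w \<in> W1" "{b1,b2,w} \<in> H" by (auto simp: SB_def)
        then obtain f where f: "f \<in> H" "f \<subseteq> W" "w \<in> f" using W1char by blast
        have U': "U = {x,b1,b2,a1,a2}" using Ueq by auto
        show ?thesis using GA[of b1 b2 a1 a2 w f] assms(3,4) e1eq e2eq U' dist a12(2) b12(2)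
            \<open>{b1,b2,w} \<in> H\<close> f by auto
      qed
      then show ?thesis using part1 by linarith
    next
      case True
      then have "card H1 \<le> card W1" using nodouble by blast
      show ?thesis
      proof (cases "XE = {}")
        case False
        then show ?thesis using GX \<open>card H1 \<le> card W1\<close> k4 by linarith
      next
        case True
        then have "card H1 = 0" using cH1 \<open>SA = {} \<and> SB = {}\<close> by simp
        then show ?thesis using G0 k4 by linarith
      qed
    qed
  qed
  show ?thesis using part1 part2 by blast
qed

end
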